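(* Let $(X,\mathrm{dist})$ be a metric space and $\Sigma$ a compact metric space. Let $T(h):\Sigma\to\Sigma$, $h\ge0$, be a semigroup with $T(h)\Sigma=\Sigma$ for all $h\ge0$, and let $\{U_\sigma(t,\tau)\}_{\sigma\in\Sigma}$ be a family of processes on $X$ satisfying the translation property $U_\sigma(h+t,h+\tau)=U_{T(h)\sigma}(t,\tau)$ for all $\sigma\in\Sigma$, $h\ge0$, $t\ge\tau$. Assume the family is uniformly asymptotically compact, and let $A_\Sigma$ be its uniform global attractor. Let $S(h)(x,\sigma)=(U_\sigma(h,0)x,T(h)\sigma)$, $h\ge0$, be the skew-product semigroup on $\boldsymbol{X}=X\times\Sigma$. Then $S(h)$ has a (unique) global attractor $\boldsymbol{A}$, and $\Pi_1\boldsymbol{A}=A_\Sigma$, $\Pi_2\boldsymbol{A}=\Sigma$, where $\Pi_1,\Pi_2$ are the canonical projections of $\boldsymbol{X}$ onto $X$ and $\Sigma$.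
   Context: A process on $X$ is a family of maps $U(t,\tau):X\to X$, indexed by reals $t\ge\tau$, with $U(\tau,\tau)=\mathrm{id}_X$ and $U(t,\tau)=U(t,s)U(s,\tau)$ for $t\ge s\ge\tau$; no continuity is assumed. For nonempty subsets $B,C$ of a metric space $Y$, $\delta_Y(B,C)=\sup_{x\in B}\inf_{\xi\in C}\mathrm{dist}_Y(x,\xi)$. A set $K\subset X$ is uniformly attracting for the family if for every bounded $C\subset X$, $\lim_{t-\tau\to\infty}\sup_{\sigma\in\Sigma}\delta_X(U_\sigma(t,\tau)C,K)=0$. The family is uniformly asymptotically compact if there exists a compact uniformly attracting set; its uniform global attractor $A_\Sigma$ is the compact uniformly attracting set contained in every compact uniformly attracting set (it exists under uniform asymptotic compactness). $\boldsymbol{X}=X\times\Sigma$ carries the product metric. For a semigroup $V(h)$, $h\ge0$, on a metric space $Y$ (no continuity assumed), a set $K\subset Y$ is attracting if $\lim_{h\to\infty}\delta_Y(V(h)C,K)=0$ for every bounded $C\subset Y$; the global attractor of $V(h)$ is the smallest compact attracting set (i.e. a compact attracting set contained in every compact attracting set). *)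

theory Defs
  imports "HOL-Analysis.Analysis"
begin

text \<open>Hausdorff semidistance delta(B,C) = sup over x in B of inf over xi in C of dist x xi,
  taken in the extended reals so that inf over the empty set is +infinity and
  unbounded suprema are +infinity.\<close>
definition hsemidist :: "'a::metric_space set \<Rightarrow> 'a set \<Rightarrow> ereal" where
  "hsemidist B C = (SUP x\<in>B. INF \<xi>\<in>C. ereal (dist x \<xi>))"

definition is_process :: "(real \<Rightarrow> real \<Rightarrow> 'a \<Rightarrow> 'a) \<Rightarrow> bool" where
  "is_process U \<longleftrightarrow> (\<forall>\<tau>. U \<tau> \<tau> = id) \<and>
     (\<forall>t s \<tau>. \<tau> \<le> s \<and> s \<le> t \<longrightarrow> U t \<tau> = U t s \<circ> U s \<tau>)"

definition is_semigroup_on :: "'b set \<Rightarrow> (real \<Rightarrow> 'b \<Rightarrow> 'b) \<Rightarrow> bool" where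
  "is_semigroup_on Sig T \<longleftrightarrow> (\<forall>h\<ge>0. T h ` Sig \<subseteq> Sig) \<and> (\<forall>\<sigma>\<in>Sig. T 0 \<sigma> = \<sigma>) \<and>
     (\<forall>h\<ge>0. \<forall>k\<ge>0. \<forall>\<sigma>\<in>Sig. T (h + k) \<sigma> = T h (T k \<sigma>))"

definition unif_attracting ::
  "'b set \<Rightarrow> ('b \<Rightarrow> real \<Rightarrow> real \<Rightarrow> 'a::metric_space \<Rightarrow> 'a) \<Rightarrow> 'a set \<Rightarrow> bool" where
  "unif_attracting Sig U K \<longleftrightarrow>
     (\<forall>C. bounded C \<and> C \<noteq> {} \<longrightarrow>
        (\<forall>e>0. \<exists>L. \<forall>t \<tau>. \<tau> \<le> t \<and> L \<le> t - \<tau> \<longrightarrow>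
           \<bar>(SUP \<sigma>\<in>Sig. hsemidist (U \<sigma> t \<tau> ` C) K)\<bar> < ereal e))"

definition unif_asymp_compact ::
  "'b set \<Rightarrow> ('b \<Rightarrow> real \<Rightarrow> real \<Rightarrow> 'a::metric_space \<Rightarrow> 'a) \<Rightarrow> bool" where
  "unif_asymp_compact Sig U \<longleftrightarrow> (\<exists>K. compact K \<and> unif_attracting Sig U K)"

definition unif_global_attractor ::
  "'b set \<Rightarrow> ('b \<Rightarrow> real \<Rightarrow> real \<Rightarrow> 'a::metric_space \<Rightarrow> 'a) \<Rightarrow> 'a set \<Rightarrow> bool" where
  "unif_global_attractor Sig U A \<longleftrightarrow> compact A \<and> unif_attracting Sig U A \<and>
     (\<forall>K. compact K \<and> unif_attracting Sig U K \<longrightarrow> A \<subseteq> K)"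

definition sg_attracting :: "'c::metric_space set \<Rightarrow> (real \<Rightarrow> 'c \<Rightarrow> 'c) \<Rightarrow> 'c set \<Rightarrow> bool" where
  "sg_attracting Y V K \<longleftrightarrow>
     (\<forall>C. C \<subseteq> Y \<and> bounded C \<and> C \<noteq> {} \<longrightarrow>
        (\<forall>e>0. \<exists>L. \<forall>h. h \<ge> 0 \<and> L \<le> h \<longrightarrow> \<bar>hsemidist (V h ` C) K\<bar> < ereal e))"

definition sg_global_attractor :: "'c::metric_space set \<Rightarrow> (real \<Rightarrow> 'c \<Rightarrow> 'c) \<Rightarrow> 'c set \<Rightarrow> bool" where
  "sg_global_attractor Y V A \<longleftrightarrow> A \<subseteq> Y \<and> compact A \<and> sg_attracting Y V A \<and>
     (\<forall>K. K \<subseteq> Y \<and> compact K \<and> sg_attracting Y V K \<longrightarrow> A \<subseteq> K)"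

definition skew_product ::
  "('b \<Rightarrow> real \<Rightarrow> real \<Rightarrow> 'a \<Rightarrow> 'a) \<Rightarrow> (real \<Rightarrow> 'b \<Rightarrow> 'b) \<Rightarrow> real \<Rightarrow> 'a \<times> 'b \<Rightarrow> 'a \<times> 'b" where
  "skew_product U T h = (\<lambda>(x, \<sigma>). (U \<sigma> h 0 x, T h \<sigma>))"

end

theory Submission
  imports Defs
begin

lemma hsd_pointD:
  assumes "\<bar>hsemidist B K\<bar> < ereal e" "b \<in> B"
  shows "\<exists>\<xi>\<in>K. dist b \<xi> < e"
proof -
  have "hsemidist B K \<le> \<bar>hsemidist B K\<bar>" by (cases "hsemidist B K") auto
  hence "hsemidist B K < ereal e" using assms(1) by simp
  moreover have "(INF \<xi>\<in>K. ereal (dist b \<xi>)) \<le> hsemidist B K"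
    unfolding hsemidist_def using assms(2) by (rule SUP_upper)
  ultimately have "(INF \<xi>\<in>K. ereal (dist b \<xi>)) < ereal e" by simp
  then show ?thesis by (simp add: INF_less_iff)
qed

lemma hsd_nonneg:
  assumes "B \<noteq> {}" shows "0 \<le> hsemidist B K"
proof -
  obtain b where "b \<in> B" using assms by auto
  have "0 \<le> (INF \<xi>\<in>K. ereal (dist b \<xi>))" by (rule INF_greatest) simp
  also have "\<dots> \<le> hsemidist B K" unfolding hsemidist_def using \<open>b \<in> B\<close> by (rule SUP_upper)
  finally show ?thesis .
qed

lemma hsd_le:
  assumes "\<forall>b\<in>B. \<exists>\<xi>\<in>K. dist b \<xi> < d"
  shows "hsemidist B K \<le> ereal d"
  unfolding hsemidist_def
proof (rule SUP_least)
  fix b assume "b \<in> B"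
  then obtain \<xi> where "\<xi> \<in> K" "dist b \<xi> < d" using assms by auto
  hence "(INF \<xi>\<in>K. ereal (dist b \<xi>)) \<le> ereal (dist b \<xi>)" by (intro INF_lower)
  also have "\<dots> \<le> ereal d" using \<open>dist b \<xi> < d\<close> by simp
  finally show "(INF \<xi>\<in>K. ereal (dist b \<xi>)) \<le> ereal d" .
qed

lemma hsd_absI:
  assumes "B \<noteq> {}" "\<forall>b\<in>B. \<exists>\<xi>\<in>K. dist b \<xi> < d" "d < e"
  shows "\<bar>hsemidist B K\<bar> < ereal e"
proof -
  have "0 \<le> hsemidist B K" using assms(1) by (rule hsd_nonneg)
  moreover have "hsemidist B K \<le> ereal d" using assms(2) by (rule hsd_le)
  ultimately show ?thesis using assms(3) by (cases "hsemidist B K") auto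
qed

definition pw_sg :: "'c::metric_space set \<Rightarrow> (real \<Rightarrow> 'c \<Rightarrow> 'c) \<Rightarrow> 'c set \<Rightarrow> bool" where
  "pw_sg Y V K \<longleftrightarrow> (\<forall>C. C \<subseteq> Y \<and> bounded C \<and> C \<noteq> {} \<longrightarrow>
     (\<forall>e>0. \<exists>L. \<forall>h c. 0 \<le> h \<and> L \<le> h \<and> c \<in> C \<longrightarrow> (\<exists>\<xi>\<in>K. dist (V h c) \<xi> < e)))"

lemma sg_pw: "sg_attracting Y V K \<longleftrightarrow> pw_sg Y V K"
proof
  assume a: "sg_attracting Y V K"
  show "pw_sg Y V K" unfolding pw_sg_def
  proof (intro allI impI)
    fix C e assume C: "C \<subseteq> Y \<and> bounded C \<and> C \<noteq> {}" and e: "(0::real) < e"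
    then obtain L where L: "\<forall>h. h \<ge> 0 \<and> L \<le> h \<longrightarrow> \<bar>hsemidist (V h ` C) K\<bar> < ereal e"
      using a unfolding sg_attracting_def by blast
    show "\<exists>L. \<forall>h c. 0 \<le> h \<and> L \<le> h \<and> c \<in> C \<longrightarrow> (\<exists>\<xi>\<in>K. dist (V h c) \<xi> < e)"
      using L hsd_pointD by blast
  qed
next
  assume a: "pw_sg Y V K"
  show "sg_attracting Y V K" unfolding sg_attracting_def
  proof (intro allI impI)
    fix C e assume C: "C \<subseteq> Y \<and> bounded C \<and> C \<noteq> {}" and e: "(0::real) < e"
    then obtain L where L: "\<forall>h c. 0 \<le> h \<and> L \<le> h \<and> c \<in> C \<longrightarrow> (\<exists>\<xi>\<in>K. dist (V h c) \<xi> < e/2)"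
      using a unfolding pw_sg_def by (meson half_gt_zero)
    show "\<exists>L. \<forall>h. h \<ge> 0 \<and> L \<le> h \<longrightarrow> \<bar>hsemidist (V h ` C) K\<bar> < ereal e"
    proof (intro exI allI impI)
      fix h assume "h \<ge> 0 \<and> L \<le> h"
      thus "\<bar>hsemidist (V h ` C) K\<bar> < ereal e"
        using C e L by (intro hsd_absI[where d="e/2"]) auto
    qed
  qed
qed

definition pw_u :: "'b set \<Rightarrow> ('b \<Rightarrow> real \<Rightarrow> real \<Rightarrow> 'a::metric_space \<Rightarrow> 'a) \<Rightarrow> 'a set \<Rightarrow> bool" where
  "pw_u Sig U K \<longleftrightarrow> (\<forall>C. bounded C \<and> C \<noteq> {} \<longrightarrow>
     (\<forall>e>0. \<exists>L. \<forall>t \<tau> \<sigma> c. \<tau> \<le> t \<and> L \<le> t - \<tau> \<and> \<sigma> \<in> Sig \<and> c \<in> C \<longrightarrow>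
        (\<exists>\<xi>\<in>K. dist (U \<sigma> t \<tau> c) \<xi> < e)))"

lemma u_pw1:
  fixes U :: "'s \<Rightarrow> real \<Rightarrow> real \<Rightarrow> 'a::metric_space \<Rightarrow> 'a"
  assumes "unif_attracting Sig U K" shows "pw_u Sig U K"
  unfolding pw_u_def
proof (intro allI impI)
  fix C :: "'a set" and e assume C: "bounded C \<and> C \<noteq> {}" and e: "(0::real) < e"
  then obtain L where L: "\<forall>t \<tau>. \<tau> \<le> t \<and> L \<le> t - \<tau> \<longrightarrow>
           \<bar>(SUP \<sigma>\<in>Sig. hsemidist (U \<sigma> t \<tau> ` C) K)\<bar> < ereal e"
    using assms unfolding unif_attracting_def by blast
  show "\<exists>L. \<forall>t \<tau> \<sigma> c. \<tau> \<le> t \<and> L \<le> t - \<tau> \<and> \<sigma> \<in> Sig \<and> c \<in> C \<longrightarrow>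
        (\<exists>\<xi>\<in>K. dist (U \<sigma> t \<tau> c) \<xi> < e)"
  proof (intro exI allI impI)
    fix t \<tau> \<sigma> c assume h: "\<tau> \<le> t \<and> L \<le> t - \<tau> \<and> \<sigma> \<in> Sig \<and> c \<in> C"
    let ?S = "(SUP \<sigma>\<in>Sig. hsemidist (U \<sigma> t \<tau> ` C) K)"
    have "?S \<le> \<bar>?S\<bar>" by (cases ?S) auto
    hence "?S < ereal e" using L h by (meson order_le_less_trans)
    moreover have "hsemidist (U \<sigma> t \<tau> ` C) K \<le> ?S" using h by (intro SUP_upper) auto
    ultimately have "hsemidist (U \<sigma> t \<tau> ` C) K < ereal e" by simp
    moreover have "0 \<le> hsemidist (U \<sigma> t \<tau> ` C) K" using C by (intro hsd_nonneg) auto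
    ultimately have "\<bar>hsemidist (U \<sigma> t \<tau> ` C) K\<bar> < ereal e" by (cases "hsemidist (U \<sigma> t \<tau> ` C) K") auto
    thus "\<exists>\<xi>\<in>K. dist (U \<sigma> t \<tau> c) \<xi> < e" using h by (intro hsd_pointD) auto
  qed
qed

lemma u_pw2:
  fixes U :: "'s \<Rightarrow> real \<Rightarrow> real \<Rightarrow> 'a::metric_space \<Rightarrow> 'a"
  assumes "pw_u Sig U K" "Sig \<noteq> {}" shows "unif_attracting Sig U K"
  unfolding unif_attracting_def
proof (intro allI impI)
  fix C :: "'a set" and e assume C: "bounded C \<and> C \<noteq> {}" and e: "(0::real) < e"
  then obtain L where L: "\<forall>t \<tau> \<sigma> c. \<tau> \<le> t \<and> L \<le> t - \<tau> \<and> \<sigma> \<in> Sig \<and> c \<in> C \<longrightarrow>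
        (\<exists>\<xi>\<in>K. dist (U \<sigma> t \<tau> c) \<xi> < e/2)"
    using assms unfolding pw_u_def by (meson half_gt_zero)
  show "\<exists>L. \<forall>t \<tau>. \<tau> \<le> t \<and> L \<le> t - \<tau> \<longrightarrow>
           \<bar>(SUP \<sigma>\<in>Sig. hsemidist (U \<sigma> t \<tau> ` C) K)\<bar> < ereal e"
  proof (intro exI allI impI)
    fix t \<tau> assume h: "\<tau> \<le> t \<and> L \<le> t - \<tau>"
    let ?S = "(SUP \<sigma>\<in>Sig. hsemidist (U \<sigma> t \<tau> ` C) K)"
    have "?S \<le> ereal (e/2)"
    proof (rule SUP_least)
      fix \<sigma> assume "\<sigma> \<in> Sig"
      thus "hsemidist (U \<sigma> t \<tau> ` C) K \<le> ereal (e/2)" using L h by (intro hsd_le) auto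
    qed
    moreover obtain \<sigma> where "\<sigma> \<in> Sig" using assms(2) by auto
    hence "0 \<le> ?S" using C by (meson SUP_upper2 hsd_nonneg image_is_empty)
    ultimately show "\<bar>?S\<bar> < ereal e" using e by (cases ?S) auto
  qed
qed

lemma inv_small:
  fixes x e :: real assumes "e > 0" "2 / e < x" shows "1 / x < e / 2"
proof -
  have "0 < 2/e" using assms by simp
  hence x: "x > 0" using assms by linarith
  have "2 < x * e" using assms by (simp add: divide_less_eq mult.commute)
  thus ?thesis using x assms(1) by (simp add: divide_less_eq field_simps)
qed

definition omega :: "(real \<Rightarrow> 'c::metric_space \<Rightarrow> 'c) \<Rightarrow> 'c set \<Rightarrow> 'c set" where
  "omega V C = {p. \<forall>e>0. \<forall>L. \<exists>h c. 0 \<le> h \<and> L \<le> h \<and> c \<in> C \<and> dist (V h c) p < e}"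

lemma omega_sub:
  assumes "pw_sg Y V K" "closed K" "C \<subseteq> Y" "bounded C" "C \<noteq> {}"
  shows "omega V C \<subseteq> K"
proof
  fix p assume p: "p \<in> omega V C"
  have "p \<in> closure K" unfolding closure_approachable
  proof (intro allI impI)
    fix e :: real assume e: "e > 0"
    obtain L where L: "\<forall>h c. 0 \<le> h \<and> L \<le> h \<and> c \<in> C \<longrightarrow> (\<exists>\<xi>\<in>K. dist (V h c) \<xi> < e/2)"
      using assms e unfolding pw_sg_def by (meson half_gt_zero)
    have "\<exists>h c. 0 \<le> h \<and> L \<le> h \<and> c \<in> C \<and> dist (V h c) p < e/2"
      using p e unfolding omega_def mem_Collect_eq by (meson half_gt_zero)
    then obtain h c where hc: "0 \<le> h" "L \<le> h" "c \<in> C" "dist (V h c) p < e/2" by blast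
    obtain \<xi> where "\<xi> \<in> K" "dist (V h c) \<xi> < e/2" using L hc by blast
    moreover have "dist \<xi> p \<le> dist (V h c) \<xi> + dist (V h c) p" by (rule dist_triangle3)
    ultimately have "dist \<xi> p < e" using hc by linarith
    thus "\<exists>y\<in>K. dist y p < e" using \<open>\<xi> \<in> K\<close> by blast
  qed
  thus "p \<in> K" using assms(2) by simp
qed

lemma omega_attr:
  assumes "pw_sg Y V K" "compact K" "C \<subseteq> Y" "bounded C" "C \<noteq> {}" "e > 0"
  shows "\<exists>L. \<forall>h c. 0 \<le> h \<and> L \<le> h \<and> c \<in> C \<longrightarrow> (\<exists>\<xi>\<in>omega V C. dist (V h c) \<xi> < e)"
proof (rule ccontr)
  assume "\<not> ?thesis"
  hence neg: "\<forall>L. \<exists>h c. 0 \<le> h \<and> L \<le> h \<and> c \<in> C \<and> (\<forall>\<xi>\<in>omega V C. e \<le> dist (V h c) \<xi>)"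
    by (auto simp: not_less)
  have "\<forall>n::nat. \<exists>L. \<forall>h c. 0 \<le> h \<and> L \<le> h \<and> c \<in> C \<longrightarrow> (\<exists>\<xi>\<in>K. dist (V h c) \<xi> < 1 / (real n + 1))"
    using assms(1,3,4,5) unfolding pw_sg_def by simp
  then obtain Lf where Lf: "\<forall>n. \<forall>h c. 0 \<le> h \<and> Lf n \<le> h \<and> c \<in> C \<longrightarrow> (\<exists>\<xi>\<in>K. dist (V h c) \<xi> < 1 / (real n + 1))"
    by (erule choice[THEN exE])
  have "\<forall>n::nat. \<exists>hc. 0 \<le> fst hc \<and> max (Lf n) (real n) \<le> fst hc \<and> snd hc \<in> C \<and> (\<forall>\<xi>\<in>omega V C. e \<le> dist (V (fst hc) (snd hc)) \<xi>)"
  proof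
    fix n show "\<exists>hc. 0 \<le> fst hc \<and> max (Lf n) (real n) \<le> fst hc \<and> snd hc \<in> C \<and> (\<forall>\<xi>\<in>omega V C. e \<le> dist (V (fst hc) (snd hc)) \<xi>)"
      using neg[rule_format, of "max (Lf n) (real n)"] by (elim exE) (rule_tac x="(h,c)" in exI, simp)
  qed
  then obtain hcf where hcf0: "\<forall>n. 0 \<le> fst (hcf n) \<and> max (Lf n) (real n) \<le> fst (hcf n) \<and> snd (hcf n) \<in> C \<and> (\<forall>\<xi>\<in>omega V C. e \<le> dist (V (fst (hcf n)) (snd (hcf n))) \<xi>)"
    by (erule choice[THEN exE])
  define hf where "hf n = fst (hcf n)" for n
  define cf where "cf n = snd (hcf n)" for n
  have hcf: "0 \<le> hf n \<and> max (Lf n) (real n) \<le> hf n \<and> cf n \<in> C \<and> (\<forall>\<xi>\<in>omega V C. e \<le> dist (V (hf n) (cf n)) \<xi>)" for n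
    using hcf0 unfolding hf_def cf_def by blast
  have "\<forall>n. \<exists>\<xi>. \<xi> \<in> K \<and> dist (V (hf n) (cf n)) \<xi> < 1 / (real n + 1)"
  proof
    fix n show "\<exists>\<xi>. \<xi> \<in> K \<and> dist (V (hf n) (cf n)) \<xi> < 1 / (real n + 1)"
      using spec[OF spec[OF spec[OF Lf, of n], of "hf n"], of "cf n"] hcf[of n] by auto
  qed
  then obtain xf where xf0: "\<forall>n. xf n \<in> K \<and> dist (V (hf n) (cf n)) (xf n) < 1 / (real n + 1)"
    by (erule choice[THEN exE])
  hence xf: "xf n \<in> K \<and> dist (V (hf n) (cf n)) (xf n) < 1 / (real n + 1)" for n by blast
  have "\<forall>n. xf n \<in> K" using xf by blast
  then obtain l r where lr: "l \<in> K" "strict_mono (r :: nat \<Rightarrow> nat)" "(xf \<circ> r) \<longlonglongrightarrow> l"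
    by (rule seq_compactE[OF compact_imp_seq_compact[OF assms(2)]])
  have lom: "l \<in> omega V C" unfolding omega_def
  proof (intro CollectI allI impI)
    fix e' :: real and L assume e': "e' > 0"
    obtain N where N: "\<forall>n\<ge>N. dist ((xf \<circ> r) n) l < e'/2"
      using lr(3) e' unfolding LIMSEQ_def by (meson half_gt_zero)
    obtain M :: nat where M: "2 / e' < real M" using reals_Archimedean2 by blast
    obtain M2 :: nat where M2: "L < real M2" using reals_Archimedean2 by blast
    define n where "n = max N (max M M2)"
    have rn: "n \<le> r n" using lr(2) by (rule seq_suble)
    have d1: "dist (xf (r n)) l < e'/2" using N n_def by simp
    have "real M \<le> real (r n)" using rn n_def by simp
    hence "2 / e' < real (r n) + 1" using M by linarith
    hence "1 / (real (r n) + 1) < e' / 2" using e'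
      by (intro inv_small) auto
    hence d2: "dist (V (hf (r n)) (cf (r n))) (xf (r n)) < e'/2" using xf[of "r n"] by linarith
    have "dist (V (hf (r n)) (cf (r n))) l < e'" using d1 d2 dist_triangle[of "V (hf (r n)) (cf (r n))" l "xf (r n)"] by linarith
    moreover have "L \<le> hf (r n)" using hcf[of "r n"] rn n_def M2 by auto
    ultimately show "\<exists>h c. 0 \<le> h \<and> L \<le> h \<and> c \<in> C \<and> dist (V h c) l < e'" using hcf by blast
  qed
  obtain N where N: "\<forall>n\<ge>N. dist ((xf \<circ> r) n) l < e/2"
    using lr(3) assms(6) unfolding LIMSEQ_def by (meson half_gt_zero)
  obtain M :: nat where M: "2 / e < real M" using reals_Archimedean2 by blast
  define n where "n = max N M"
  have rn: "n \<le> r n" using lr(2) by (rule seq_suble)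
  have d1: "dist (xf (r n)) l < e/2" using N n_def by simp
  have "real M \<le> real (r n)" using rn n_def by simp
  hence "2 / e < real (r n) + 1" using M by linarith
  hence "1 / (real (r n) + 1) < e / 2" using assms(6)
    by (intro inv_small) auto
  hence d2: "dist (V (hf (r n)) (cf (r n))) (xf (r n)) < e/2" using xf[of "r n"] by linarith
  have "dist (V (hf (r n)) (cf (r n))) l < e" using d1 d2 dist_triangle[of "V (hf (r n)) (cf (r n))" l "xf (r n)"] by linarith
  moreover have "e \<le> dist (V (hf (r n)) (cf (r n))) l" using hcf lom by blast
  ultimately show False by simp
qed

lemma global_exists:
  fixes V :: "real \<Rightarrow> 'c::metric_space \<Rightarrow> 'c"
  assumes K: "K \<subseteq> Y" "compact K" "pw_sg Y V K"
  shows "\<exists>AA. sg_global_attractor Y V AA"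
proof -
  define W where "W = \<Union>{omega V C | C. C \<subseteq> Y \<and> bounded C \<and> C \<noteq> {}}"
  define AA where "AA = closure W"
  have cK: "closed K" using K(2) by (rule compact_imp_closed)
  have sub: "AA \<subseteq> K'" if "closed K'" "pw_sg Y V K'" for K'
  proof -
    have "W \<subseteq> K'"
    proof
      fix p assume "p \<in> W"
      then obtain C where C: "C \<subseteq> Y" "bounded C" "C \<noteq> {}" "p \<in> omega V C"
        unfolding W_def by blast
      show "p \<in> K'" using omega_sub[OF that(2) that(1) C(1,2,3)] C(4) by blast
    qed
    thus ?thesis unfolding AA_def using that(1) by (rule closure_minimal)
  qed
  have AAK: "AA \<subseteq> K" using sub[OF cK K(3)] .
  have "compact AA"
  proof -
    have "closed AA" unfolding AA_def by (rule closed_closure)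
    with K(2) have "compact (K \<inter> AA)" by (rule compact_Int_closed)
    moreover have "K \<inter> AA = AA" using AAK by blast
    ultimately show ?thesis by simp
  qed
  moreover have "pw_sg Y V AA" unfolding pw_sg_def
  proof (intro allI impI)
    fix C e assume C: "C \<subseteq> Y \<and> bounded C \<and> C \<noteq> {}" and e: "(0::real) < e"
    have "omega V C \<subseteq> W" unfolding W_def using C by blast
    hence om: "omega V C \<subseteq> AA" unfolding AA_def using closure_subset by (rule subset_trans)
    obtain L where L: "\<forall>h c. 0 \<le> h \<and> L \<le> h \<and> c \<in> C \<longrightarrow> (\<exists>\<xi>\<in>omega V C. dist (V h c) \<xi> < e)"
      using omega_attr[OF K(3) K(2) _ _ _ e, of C] C by blast
    show "\<exists>L. \<forall>h c. 0 \<le> h \<and> L \<le> h \<and> c \<in> C \<longrightarrow> (\<exists>\<xi>\<in>AA. dist (V h c) \<xi> < e)"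
    proof (intro exI allI impI)
      fix h c assume "0 \<le> h \<and> L \<le> h \<and> c \<in> C"
      then obtain \<xi> where "\<xi> \<in> omega V C" "dist (V h c) \<xi> < e" using L by blast
      thus "\<exists>\<xi>\<in>AA. dist (V h c) \<xi> < e" using om by blast
    qed
  qed
  moreover have "\<forall>K'. K' \<subseteq> Y \<and> compact K' \<and> sg_attracting Y V K' \<longrightarrow> AA \<subseteq> K'"
  proof (intro allI impI)
    fix K' assume a: "K' \<subseteq> Y \<and> compact K' \<and> sg_attracting Y V K'"
    hence "closed K'" using compact_imp_closed by blast
    moreover have "pw_sg Y V K'" using a sg_pw by blast
    ultimately show "AA \<subseteq> K'" by (rule sub)
  qed
  moreover have "AA \<subseteq> Y" using AAK K(1) by simp
  ultimately have "sg_global_attractor Y V AA"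
    unfolding sg_global_attractor_def sg_pw by simp
  thus ?thesis by blast
qed

lemma shift_lemma:
  fixes U :: "'b \<Rightarrow> real \<Rightarrow> real \<Rightarrow> 'a \<Rightarrow> 'a"
  assumes surj: "\<forall>h\<ge>0. T h ` Sig = Sig"
    and tr: "\<forall>\<sigma>\<in>Sig. \<forall>h\<ge>0. \<forall>t \<tau>. \<tau> \<le> t \<longrightarrow> U \<sigma> (h + t) (h + \<tau>) = U (T h \<sigma>) t \<tau>"
    and "\<sigma> \<in> Sig" "\<tau> \<le> t"
  shows "\<exists>\<sigma>'\<in>Sig. U \<sigma> t \<tau> = U \<sigma>' (t - \<tau>) 0"
proof (cases "\<tau> \<ge> 0")
  case True
  have "\<forall>t' \<tau>'. \<tau>' \<le> t' \<longrightarrow> U \<sigma> (\<tau> + t') (\<tau> + \<tau>') = U (T \<tau> \<sigma>) t' \<tau>'"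
    using tr assms(3) True by blast
  from this[rule_format, of 0 "t - \<tau>"]
  have "U \<sigma> (\<tau> + (t - \<tau>)) (\<tau> + 0) = U (T \<tau> \<sigma>) (t - \<tau>) 0" using assms(4) by simp
  moreover have "T \<tau> \<sigma> \<in> Sig" using surj True assms(3) by blast
  ultimately show ?thesis by auto
next
  case False
  hence "\<sigma> \<in> T (-\<tau>) ` Sig" using surj assms(3) by simp
  then obtain \<sigma>' where s': "\<sigma>' \<in> Sig" "\<sigma> = T (-\<tau>) \<sigma>'" by blast
  have "\<forall>t' \<tau>'. \<tau>' \<le> t' \<longrightarrow> U \<sigma>' (-\<tau> + t') (-\<tau> + \<tau>') = U (T (-\<tau>) \<sigma>') t' \<tau>'"
  proof -
    have "-\<tau> \<ge> 0" using False by simp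
    thus ?thesis using tr s'(1) by blast
  qed
  from this[rule_format, of \<tau> t]
  have "U \<sigma>' (-\<tau> + t) (-\<tau> + \<tau>) = U (T (-\<tau>) \<sigma>') t \<tau>" using assms(4) by simp
  thus ?thesis using s' by (intro bexI[of _ \<sigma>']) auto
qed

theorem theorem4p3:
  fixes Sig :: "'b::metric_space set"
    and T :: "real \<Rightarrow> 'b \<Rightarrow> 'b"
    and U :: "'b \<Rightarrow> real \<Rightarrow> real \<Rightarrow> 'a::metric_space \<Rightarrow> 'a"
    and A :: "'a set"
  assumes "compact Sig"
    and "is_semigroup_on Sig T"
    and "\<forall>h\<ge>0. T h ` Sig = Sig"
    and "\<forall>\<sigma>\<in>Sig. is_process (U \<sigma>)"
    and "\<forall>\<sigma>\<in>Sig. \<forall>h\<ge>0. \<forall>t \<tau>. \<tau> \<le> t \<longrightarrow> U \<sigma> (h + t) (h + \<tau>) = U (T h \<sigma>) t \<tau>"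
    and "unif_asymp_compact Sig U"
    and "unif_global_attractor Sig U A"
  shows "(\<exists>!AA. sg_global_attractor (UNIV \<times> Sig) (skew_product U T) AA) \<and>
         (\<forall>AA. sg_global_attractor (UNIV \<times> Sig) (skew_product U T) AA \<longrightarrow>
                fst ` AA = A \<and> snd ` AA = Sig)"
proof -
  note surj = assms(3) and tr = assms(5)
  define Y where "Y = (UNIV :: 'a set) \<times> Sig"
  define V where "V = skew_product U T"
  have Vsimp: "V h (x, \<sigma>) = (U \<sigma> h 0 x, T h \<sigma>)" for h x \<sigma> unfolding V_def skew_product_def by simp
  have Sne: "Sig \<noteq> {}"
  proof
    assume "Sig = {}"
    obtain K where "unif_attracting Sig U K" using assms(6) unfolding unif_asymp_compact_def by blast
    from this[unfolded unif_attracting_def, rule_format, of "{undefined}" 1]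
    have "\<exists>L. \<forall>t \<tau>. \<tau> \<le> t \<and> L \<le> t - \<tau> \<longrightarrow>
           \<bar>(SUP \<sigma>\<in>Sig. hsemidist (U \<sigma> t \<tau> ` {undefined}) K)\<bar> < ereal 1"
      by simp
    then obtain L where "\<forall>t \<tau>. \<tau> \<le> t \<and> L \<le> t - \<tau> \<longrightarrow>
           \<bar>(SUP \<sigma>\<in>Sig. hsemidist (U \<sigma> t \<tau> ` {undefined}) K)\<bar> < ereal 1" by blast
    hence "\<bar>(SUP \<sigma>\<in>Sig. hsemidist (U \<sigma> (max L 0) 0 ` {undefined}) K)\<bar> < ereal 1" by simp
    thus False using \<open>Sig = {}\<close> by (simp add: bot_ereal_def)
  qed
  have Ac: "compact A" and Aua: "unif_attracting Sig U A"
    and Amin: "\<And>K. compact K \<Longrightarrow> unif_attracting Sig U K \<Longrightarrow> A \<subseteq> K"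
    using assms(7) unfolding unif_global_attractor_def by (blast, blast, blast)
  have Apw: "pw_u Sig U A" using Aua by (rule u_pw1)
  have TS: "T h \<sigma> \<in> Sig" if "h \<ge> 0" "\<sigma> \<in> Sig" for h \<sigma> using surj that by blast
  have AS: "pw_sg Y V (A \<times> Sig)" unfolding pw_sg_def
  proof (intro allI impI)
    fix C e assume C: "C \<subseteq> Y \<and> bounded C \<and> C \<noteq> {}" and e: "(0::real) < e"
    have fb: "bounded (fst ` C)" using C by (intro bounded_fst) simp
    have fne: "fst ` C \<noteq> {}" using C by simp
    obtain L where L: "\<forall>t \<tau> \<sigma> c. \<tau> \<le> t \<and> L \<le> t - \<tau> \<and> \<sigma> \<in> Sig \<and> c \<in> fst ` C \<longrightarrow>
        (\<exists>\<xi>\<in>A. dist (U \<sigma> t \<tau> c) \<xi> < e)"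
      using Apw[unfolded pw_u_def, rule_format, OF conjI[OF fb fne] e] by (elim exE)
    show "\<exists>L. \<forall>h c. 0 \<le> h \<and> L \<le> h \<and> c \<in> C \<longrightarrow> (\<exists>\<xi>\<in>A \<times> Sig. dist (V h c) \<xi> < e)"
    proof (intro exI allI impI)
      fix h c assume h: "0 \<le> h \<and> L \<le> h \<and> c \<in> C"
      obtain x \<sigma> where c: "c = (x, \<sigma>)" by (cases c)
      have "c \<in> Y" using h C by blast
      hence \<sigma>: "\<sigma> \<in> Sig" using c unfolding Y_def by simp
      have x: "x \<in> fst ` C" using h c by (metis fst_conv image_eqI)
      obtain \<xi> where \<xi>: "\<xi> \<in> A" "dist (U \<sigma> h 0 x) \<xi> < e"
        using L[THEN spec[of _ h], THEN spec[of _ 0], THEN spec[of _ \<sigma>], THEN spec[of _ x]] h \<sigma> x by auto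
      have "(\<xi>, T h \<sigma>) \<in> A \<times> Sig" using \<xi>(1) TS[of h \<sigma>] h \<sigma> by simp
      moreover have "dist (V h c) (\<xi>, T h \<sigma>) = dist (U \<sigma> h 0 x) \<xi>"
        unfolding c Vsimp by (simp add: dist_Pair_Pair)
      ultimately show "\<exists>\<xi>\<in>A \<times> Sig. dist (V h c) \<xi> < e" using \<xi>(2) by (intro bexI) auto
    qed
  qed
  have ASc: "compact (A \<times> Sig)" using Ac assms(1) by (rule compact_Times)
  have ASY: "A \<times> Sig \<subseteq> Y" unfolding Y_def by blast
  obtain AA0 where AA0: "sg_global_attractor Y V AA0" using global_exists[OF ASY ASc AS] by blast
  have uniq: "AA1 = AA2" if a: "sg_global_attractor Y V AA1" "sg_global_attractor Y V AA2" for AA1 AA2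
  proof -
    have a1: "AA1 \<subseteq> Y" "compact AA1" "sg_attracting Y V AA1" "\<forall>K. K \<subseteq> Y \<and> compact K \<and> sg_attracting Y V K \<longrightarrow> AA1 \<subseteq> K"
      using a(1) unfolding sg_global_attractor_def by - (elim conjE, assumption)+
    have a2: "AA2 \<subseteq> Y" "compact AA2" "sg_attracting Y V AA2" "\<forall>K. K \<subseteq> Y \<and> compact K \<and> sg_attracting Y V K \<longrightarrow> AA2 \<subseteq> K"
      using a(2) unfolding sg_global_attractor_def by - (elim conjE, assumption)+
    have "AA1 \<subseteq> AA2" using a1(4) a2(1,2,3) by blast
    moreover have "AA2 \<subseteq> AA1" using a2(4) a1(1,2,3) by blast
    ultimately show ?thesis by auto
  qed
  have proj: "fst ` AA = A \<and> snd ` AA = Sig" if AA: "sg_global_attractor Y V AA" for AA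
  proof -
    have aa: "AA \<subseteq> Y" "compact AA" "sg_attracting Y V AA" "\<forall>K. K \<subseteq> Y \<and> compact K \<and> sg_attracting Y V K \<longrightarrow> AA \<subseteq> K"
      using AA unfolding sg_global_attractor_def by - (elim conjE, assumption)+
    have AAc: "compact AA" by (rule aa(2))
    have AApw: "pw_sg Y V AA" using aa(3) by (rule sg_pw[THEN iffD1])
    have "sg_attracting Y V (A \<times> Sig)" using AS by (rule sg_pw[THEN iffD2])
    hence AAsub: "AA \<subseteq> A \<times> Sig" using aa(4) ASY ASc by blast
    have f1: "fst ` AA \<subseteq> A" using AAsub by auto
    have s1: "snd ` AA \<subseteq> Sig" using AAsub by auto
    have fc: "compact (fst ` AA)" using AAc by (intro compact_continuous_image continuous_intros)
    have sc: "compact (snd ` AA)" using AAc by (intro compact_continuous_image continuous_intros)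
    have "pw_u Sig U (fst ` AA)" unfolding pw_u_def
    proof (intro allI impI)
      fix C :: "'a set" and e :: real assume C: "bounded C \<and> C \<noteq> {}" and e: "0 < e"
      have CS: "C \<times> Sig \<subseteq> Y \<and> bounded (C \<times> Sig) \<and> C \<times> Sig \<noteq> {}"
        using C Sne bounded_Times compact_imp_bounded[OF assms(1)] unfolding Y_def by auto
      obtain L where L: "\<forall>h c. 0 \<le> h \<and> L \<le> h \<and> c \<in> C \<times> Sig \<longrightarrow> (\<exists>\<xi>\<in>AA. dist (V h c) \<xi> < e)"
        using AApw[unfolded pw_sg_def, rule_format, OF CS e] by (elim exE)
      show "\<exists>L. \<forall>t \<tau> \<sigma> c. \<tau> \<le> t \<and> L \<le> t - \<tau> \<and> \<sigma> \<in> Sig \<and> c \<in> C \<longrightarrow>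
        (\<exists>\<xi>\<in>fst ` AA. dist (U \<sigma> t \<tau> c) \<xi> < e)"
      proof (intro exI allI impI)
        fix t \<tau> \<sigma> c assume h: "\<tau> \<le> t \<and> max L 0 \<le> t - \<tau> \<and> \<sigma> \<in> Sig \<and> c \<in> C"
        obtain \<sigma>' where s': "\<sigma>' \<in> Sig" "U \<sigma> t \<tau> = U \<sigma>' (t - \<tau>) 0"
          using shift_lemma[OF surj tr, of \<sigma> \<tau> t] h by blast
        have "(c, \<sigma>') \<in> C \<times> Sig" using h s'(1) by simp
        then obtain \<xi> where \<xi>: "\<xi> \<in> AA" "dist (V (t - \<tau>) (c, \<sigma>')) \<xi> < e"
          using L[THEN spec[of _ "t - \<tau>"], THEN spec[of _ "(c, \<sigma>')"]] h by auto
        have "dist (U \<sigma> t \<tau> c) (fst \<xi>) \<le> dist (V (t - \<tau>) (c, \<sigma>')) \<xi>"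
          using dist_fst_le[of "V (t - \<tau>) (c, \<sigma>')" \<xi>] s' Vsimp by simp
        hence "dist (U \<sigma> t \<tau> c) (fst \<xi>) < e" using \<xi>(2) by linarith
        thus "\<exists>\<xi>\<in>fst ` AA. dist (U \<sigma> t \<tau> c) \<xi> < e" using \<xi>(1) by (intro bexI) auto
      qed
    qed
    hence "unif_attracting Sig U (fst ` AA)" using Sne by (rule u_pw2)
    hence f2: "A \<subseteq> fst ` AA" using Amin fc by blast
    have s2: "Sig \<subseteq> snd ` AA"
    proof
      fix \<sigma> assume \<sigma>: "\<sigma> \<in> Sig"
      have "\<sigma> \<in> closure (snd ` AA)" unfolding closure_approachable
      proof (intro allI impI)
        fix e :: real assume e: "0 < e"
        have CS: "{undefined} \<times> Sig \<subseteq> Y \<and> bounded ({undefined} \<times> Sig) \<and> {undefined} \<times> Sig \<noteq> {}"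
          using Sne bounded_Times[OF bounded_insert[THEN iffD2, OF bounded_empty] compact_imp_bounded[OF assms(1)]] unfolding Y_def by auto
        obtain L where L: "\<forall>h c. 0 \<le> h \<and> L \<le> h \<and> c \<in> {undefined} \<times> Sig \<longrightarrow> (\<exists>\<xi>\<in>AA. dist (V h c) \<xi> < e)"
          using AApw[unfolded pw_sg_def, rule_format, OF CS e] by (elim exE)
        define h where "h = max L 0"
        have "\<sigma> \<in> T h ` Sig" using surj \<sigma> h_def by simp
        then obtain \<sigma>' where s': "\<sigma>' \<in> Sig" "\<sigma> = T h \<sigma>'" by blast
        have "(undefined, \<sigma>') \<in> {undefined} \<times> Sig" using s'(1) by simp
        then obtain \<xi> where \<xi>: "\<xi> \<in> AA" "dist (V h (undefined, \<sigma>')) \<xi> < e"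
          using L[THEN spec[of _ h], THEN spec[of _ "(undefined, \<sigma>')"]] h_def by auto
        have "dist (snd \<xi>) \<sigma> \<le> dist (V h (undefined, \<sigma>')) \<xi>"
          using dist_snd_le[of "V h (undefined, \<sigma>')" \<xi>] s' Vsimp by (simp add: dist_commute)
        hence "dist (snd \<xi>) \<sigma> < e" using \<xi>(2) by linarith
        thus "\<exists>y\<in>snd ` AA. dist y \<sigma> < e" using \<xi>(1) by (intro bexI) auto
      qed
      thus "\<sigma> \<in> snd ` AA" using sc compact_imp_closed closure_closed by blast
    qed
    show ?thesis using f1 f2 s1 s2 by blast
  qed
  have "\<exists>!AA. sg_global_attractor Y V AA" using AA0 uniq by (intro ex1I)
  thus ?thesis unfolding Y_def[symmetric] V_def[symmetric] using proj by simp
qed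

end
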